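(* Let $B$ be the open unit disk and $u\in C^1(\overline B)$ be harmonic in $B$ with $\nabla u\neq0$ on $\partial B$. Let $\tilde u$ be a harmonic conjugate of $u$ and $f=u+i\tilde u$. Then $M=\mathrm{WN}(f(\partial B))-1$, where $M$ is the sum of the multiplicities of the critical points of $u$ in $B$.
   Context: The multiplicity of a critical point $z_0$ of $u$ is the order of vanishing at $z_0$ of the holomorphic function $\partial_xu-i\partial_yu$. For a closed curve parameterized by a $C^1$ map $\theta\mapsto F(e^{i\theta})$ with $\partial F/\partial\theta\neq0$, its winding number is $\mathrm{WN}=\frac1{2\pi}\int_{\partial B}\mathrm d\,\arg\left(\frac{\partial F}{\partial\theta}\right)$. *)

theory Defs
  imports "HOL-Complex_Analysis.Complex_Analysis"
begin

text \<open>We identify the plane with the complex numbers; z = x + i y.\<close>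

definition px :: "(complex \<Rightarrow> real) \<Rightarrow> complex \<Rightarrow> real" where
  "px u z = deriv (\<lambda>t. u (z + of_real t)) 0"

definition py :: "(complex \<Rightarrow> real) \<Rightarrow> complex \<Rightarrow> real" where
  "py u z = deriv (\<lambda>t. u (z + \<i> * of_real t)) 0"

definition C1_gradient_on :: "(complex \<Rightarrow> real) \<Rightarrow> (complex \<Rightarrow> complex) \<Rightarrow> complex set \<Rightarrow> bool" where
  "C1_gradient_on u g S \<longleftrightarrow> continuous_on S g \<and>
     (\<forall>z\<in>S. (u has_derivative (\<lambda>h. g z \<bullet> h)) (at z within S))"

definition harmonic_on :: "(complex \<Rightarrow> real) \<Rightarrow> complex set \<Rightarrow> bool" where
  "harmonic_on u S \<longleftrightarrow>
     (\<forall>z\<in>S. u differentiable (at z) \<and> px u differentiable (at z) \<and> py u differentiable (at z)) \<and>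
     continuous_on S (px (px u)) \<and> continuous_on S (py (px u)) \<and>
     continuous_on S (px (py u)) \<and> continuous_on S (py (py u)) \<and>
     (\<forall>z\<in>S. px (px u) z + py (py u) z = 0)"

text \<open>Winding number of the closed curve theta |-> F(e^{i theta}):
  (1/2pi) times the total change of arg of dF/dtheta over [0,2pi], i.e. the
  winding number around 0 of the curve t |-> dF/dtheta (2 pi t), t in [0,1].\<close>
definition WN :: "(complex \<Rightarrow> complex) \<Rightarrow> complex" where
  "WN F = winding_number (\<lambda>t. vector_derivative (\<lambda>\<theta>. F (cis \<theta>)) (at (2 * pi * t))) 0"

definition crit_mult :: "(complex \<Rightarrow> real) \<Rightarrow> complex \<Rightarrow> int" where
  "crit_mult u z0 = zorder (\<lambda>z. complex_of_real (px u z) - \<i> * complex_of_real (py u z)) z0"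

end

theory Submission
  imports Defs "HOL-Real_Asymp.Real_Asymp"
begin

lemma boundary_integral:
  fixes f h :: "complex \<Rightarrow> complex"
  assumes contf: "continuous_on (cball 0 1) f" and conth: "continuous_on (cball 0 1) h"
    and der: "\<And>z. z \<in> ball 0 1 \<Longrightarrow> (f has_field_derivative h z) (at z)"
    and ax: "a \<le> x"
  shows "f (cis x) - f (cis a) = integral {a..x} (\<lambda>\<phi>. \<i> * cis \<phi> * h (cis \<phi>))"
proof -
  define q where "q = (\<lambda>\<phi>. \<i> * cis \<phi> * h (cis \<phi>))"
  define qr where "qr = (\<lambda>r \<phi>. of_real r * (\<i> * cis \<phi>) * h (of_real r * cis \<phi>))"
  define rs where "rs = (\<lambda>n::nat. 1 - 1 / (real n + 2))"
  have rs0: "0 < rs n" and rs1: "rs n < 1" for n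
    unfolding rs_def by (auto simp: field_simps)
  have rsa: "\<bar>rs n\<bar> \<le> 1" for n using rs0[of n] rs1[of n] by simp
  have rslim: "rs \<longlonglongrightarrow> 1" unfolding rs_def by real_asymp
  have nc: "norm (of_real r * cis \<phi>) = \<bar>r\<bar>" for r \<phi>
    by (simp add: norm_mult)
  have intg: "(qr (rs n) has_integral (f (of_real (rs n) * cis x) - f (of_real (rs n) * cis a))) {a..x}" for n
  proof -
    have "((\<lambda>\<phi>. f (of_real (rs n) * cis \<phi>)) has_vector_derivative qr (rs n) \<phi>) (at \<phi>)" for \<phi>
    proof -
      have d1: "((\<lambda>\<phi>. of_real (rs n) * cis \<phi>) has_vector_derivative (of_real (rs n) * (\<i> * cis \<phi>))) (at \<phi>)"
        by (auto intro!: derivative_eq_intros simp: has_vector_derivative_def)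
      have "of_real (rs n) * cis \<phi> \<in> ball 0 1"
        using rs0[of n] rs1[of n] by (simp add: nc)
      from field_vector_diff_chain_at[OF d1 der[OF this]]
      show ?thesis by (simp add: qr_def o_def)
    qed
    then show ?thesis
      by (intro fundamental_theorem_of_calculus[OF ax]) (auto intro: has_vector_derivative_at_within)
  qed
  obtain M where M: "\<And>z. z \<in> cball 0 1 \<Longrightarrow> norm (h z) \<le> M"
    using compact_imp_bounded[OF compact_continuous_image[OF conth compact_cball]]
    unfolding bounded_iff by (metis image_eqI)
  have le: "norm (qr (rs n) \<phi>) \<le> M" for n \<phi>
  proof -
    have "norm (qr (rs n) \<phi>) = rs n * norm (h (of_real (rs n) * cis \<phi>))"
      using rs0[of n] by (simp add: qr_def norm_mult)
    also have "\<dots> \<le> 1 * M"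
      using rs0[of n] rs1[of n] M[of "of_real (rs n) * cis \<phi>"]
      by (intro mult_mono) (auto simp: nc)
    finally show ?thesis by simp
  qed
  have conv: "(\<lambda>n. qr (rs n) \<phi>) \<longlonglongrightarrow> q \<phi>" for \<phi>
  proof -
    have l1: "(\<lambda>n. of_real (rs n) * cis \<phi>) \<longlonglongrightarrow> cis \<phi>"
      using tendsto_mult[OF tendsto_of_real[OF rslim] tendsto_const[of "cis \<phi>"]] by simp
    have "(\<lambda>n. h (of_real (rs n) * cis \<phi>)) \<longlonglongrightarrow> h (cis \<phi>)"
      by (rule continuous_on_tendsto_compose[OF conth l1]) (use rsa in \<open>auto simp: nc intro!: always_eventually\<close>)
    from tendsto_mult[OF tendsto_mult[OF tendsto_of_real[OF rslim] tendsto_const[of "\<i> * cis \<phi>"]] this]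
    show ?thesis by (simp add: qr_def q_def)
  qed
  have dc: "(\<lambda>n. integral {a..x} (qr (rs n))) \<longlonglongrightarrow> integral {a..x} q"
    by (rule dominated_convergence(2)[where h="\<lambda>_. M"]) (use intg le conv in auto)
  have lf: "(\<lambda>n. f (of_real (rs n) * cis y)) \<longlonglongrightarrow> f (cis y)" for y
  proof -
    have l1: "(\<lambda>n. of_real (rs n) * cis y) \<longlonglongrightarrow> cis y"
      using tendsto_mult[OF tendsto_of_real[OF rslim] tendsto_const[of "cis y"]] by simp
    show ?thesis
      by (rule continuous_on_tendsto_compose[OF contf l1]) (use rsa in \<open>auto simp: nc intro!: always_eventually\<close>)
  qed
  have "(\<lambda>n. integral {a..x} (qr (rs n))) \<longlonglongrightarrow> f (cis x) - f (cis a)"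
  proof -
    have "integral {a..x} (qr (rs n)) = f (of_real (rs n) * cis x) - f (of_real (rs n) * cis a)" for n
      using intg[of n] by (rule integral_unique)
    then show ?thesis using tendsto_diff[OF lf[of x] lf[of a]] by simp
  qed
  from LIMSEQ_unique[OF this dc] show ?thesis by (simp add: q_def)
qed

lemma boundary_deriv:
  fixes f h :: "complex \<Rightarrow> complex"
  assumes contf: "continuous_on (cball 0 1) f" and conth: "continuous_on (cball 0 1) h"
    and der: "\<And>z. z \<in> ball 0 1 \<Longrightarrow> (f has_field_derivative h z) (at z)"
  shows "((\<lambda>\<theta>. f (cis \<theta>)) has_vector_derivative (\<i> * cis \<theta> * h (cis \<theta>))) (at \<theta>)"
proof -
  define a where "a = \<theta> - 1"
  define b where "b = \<theta> + 1"
  define q where "q = (\<lambda>\<phi>. \<i> * cis \<phi> * h (cis \<phi>))"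
  have cq: "continuous_on {a..b} q"
  proof -
    have c1: "continuous_on {a..b} (\<lambda>\<phi>. cis \<phi>)" by (intro continuous_intros)
    have c2: "continuous_on {a..b} (\<lambda>\<phi>. h (cis \<phi>))"
      by (rule continuous_on_compose2[OF conth c1]) auto
    show ?thesis unfolding q_def by (intro continuous_on_mult continuous_on_const c1 c2)
  qed
  have "((\<lambda>u. f (cis a) + integral {a..u} q) has_vector_derivative q \<theta>) (at \<theta> within {a..b})"
    using has_vector_derivative_add[OF has_vector_derivative_const integral_has_vector_derivative[OF cq, of \<theta>]]
    by (simp add: a_def b_def)
  moreover have "\<theta> \<in> interior {a..b}" by (simp add: a_def b_def)
  ultimately have d: "((\<lambda>u. f (cis a) + integral {a..u} q) has_vector_derivative q \<theta>) (at \<theta>)"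
    by (metis at_within_interior)
  show ?thesis
  proof (rule has_vector_derivative_transform_within_open[OF d[unfolded q_def], of "{a<..<b}"])
    fix y assume "y \<in> {a<..<b}"
    then show "f (cis a) + integral {a..y} (\<lambda>\<phi>. \<i> * cis \<phi> * h (cis \<phi>)) = f (cis y)"
      using boundary_integral[OF contf conth der, of a y] by (simp add: algebra_simps)
  qed (auto simp: a_def b_def)
qed


theorem proposition3p6:
  fixes u v :: "complex \<Rightarrow> real" and g :: "complex \<Rightarrow> complex" and f :: "complex \<Rightarrow> complex"
  assumes C1: "C1_gradient_on u g (cball 0 1)"
    and harm: "harmonic_on u (ball 0 1)"
    and grad_nz: "\<And>z. z \<in> sphere 0 1 \<Longrightarrow> g z \<noteq> 0"
    and conj_harm: "harmonic_on v (ball 0 1)"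
    and conj_hol: "(\<lambda>z. complex_of_real (u z) + \<i> * complex_of_real (v z)) holomorphic_on ball 0 1"
    and conj_cont: "continuous_on (cball 0 1) v"
    and f_def: "f = (\<lambda>z. complex_of_real (u z) + \<i> * complex_of_real (v z))"
  shows "of_int (\<Sum>z\<in>{z \<in> ball 0 1. px u z = 0 \<and> py u z = 0}. crit_mult u z) = WN f - 1"
proof -
  define h where "h = (\<lambda>z. cnj (g z))"
  have contg: "continuous_on (cball 0 1) g"
    and dg: "\<And>z. z \<in> cball 0 1 \<Longrightarrow> (u has_derivative (\<lambda>k. g z \<bullet> k)) (at z within cball 0 1)"
    using C1 by (auto simp: C1_gradient_on_def)
  have contu: "continuous_on (cball 0 1) u"
    unfolding continuous_on_eq_continuous_within using dg has_derivative_continuous by blast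
  have contf: "continuous_on (cball 0 1) f"
    unfolding f_def
    by (intro continuous_intros continuous_on_of_real contu conj_cont)
  have conth: "continuous_on (cball 0 1) h"
    unfolding h_def by (intro continuous_intros contg)
  have dgi: "(u has_derivative (\<lambda>k. g z \<bullet> k)) (at z)" if z: "z \<in> ball 0 1" for z
  proof -
    have "at z within cball 0 1 = at z"
      by (rule at_within_interior) (use z in simp)
    with dg[of z] z show ?thesis by simp
  qed
  have hol: "f holomorphic_on ball 0 1" using conj_hol f_def by simp
  have fder: "(f has_field_derivative h z) (at z)" if z: "z \<in> ball 0 1" for z
  proof -
    define d where "d = deriv f z"
    have fd: "(f has_field_derivative d) (at z)"
      unfolding d_def by (rule holomorphic_derivI[OF hol open_ball z])
    have "((\<lambda>w. Re (f w)) has_derivative (\<lambda>k. Re (d * k))) (at z)"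
      using fd unfolding has_field_derivative_def by (auto intro!: derivative_eq_intros)
    moreover have "(\<lambda>w. Re (f w)) = u" by (simp add: f_def)
    ultimately have "(u has_derivative (\<lambda>k. Re (d * k))) (at z)" by simp
    from has_derivative_unique[OF dgi[OF z] this]
    have eq: "\<And>k. g z \<bullet> k = Re (d * k)" by metis
    have "Re (g z) = Re d" using eq[of 1] by (simp add: inner_complex_def)
    moreover have "Im (g z) = - Im d" using eq[of \<i>] by (simp add: inner_complex_def)
    ultimately have "d = h z" by (simp add: h_def complex_eq_iff)
    with fd show ?thesis by simp
  qed
  have pxpy: "px u z = Re (g z) \<and> py u z = Im (g z)" if z: "z \<in> ball 0 1" for z
  proof -
    have "((\<lambda>t. u (z + of_real t)) has_derivative (\<lambda>t. g z \<bullet> of_real t)) (at 0)"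
    proof -
      have d0: "(u has_derivative (\<lambda>k. g z \<bullet> k)) (at (z + of_real 0))" using dgi[OF z] by simp
      have "((\<lambda>t. z + of_real t) has_derivative (\<lambda>t. of_real t)) (at (0::real))"
        by (auto intro!: derivative_eq_intros)
      from has_derivative_compose[OF this d0] show ?thesis by simp
    qed
    moreover have "(\<lambda>t. g z \<bullet> of_real t) = (*) (Re (g z))"
      by (auto simp: inner_complex_def)
    ultimately have 1: "((\<lambda>t. u (z + of_real t)) has_field_derivative Re (g z)) (at 0)"
      by (simp add: has_field_derivative_def)
    have "((\<lambda>t. u (z + \<i> * of_real t)) has_derivative (\<lambda>t. g z \<bullet> (\<i> * of_real t))) (at 0)"
    proof -
      have d0: "(u has_derivative (\<lambda>k. g z \<bullet> k)) (at (z + \<i> * of_real 0))" using dgi[OF z] by simp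
      have "((\<lambda>t. z + \<i> * of_real t) has_derivative (\<lambda>t. \<i> * of_real t)) (at (0::real))"
        by (auto intro!: derivative_eq_intros)
      from has_derivative_compose[OF this d0] show ?thesis by simp
    qed
    moreover have "(\<lambda>t. g z \<bullet> (\<i> * of_real t)) = (*) (Im (g z))"
      by (auto simp: inner_complex_def)
    ultimately have 2: "((\<lambda>t. u (z + \<i> * of_real t)) has_field_derivative Im (g z)) (at 0)"
      by (simp add: has_field_derivative_def)
    show ?thesis using DERIV_imp_deriv[OF 1] DERIV_imp_deriv[OF 2] by (simp add: px_def py_def)
  qed
  have crit: "complex_of_real (px u z) - \<i> * complex_of_real (py u z) = h z" if "z \<in> ball 0 1" for z
    using pxpy[OF that] by (simp add: h_def complex_eq_iff)
  have setEq: "{z \<in> ball 0 1. px u z = 0 \<and> py u z = 0} = {z \<in> ball 0 1. h z = 0}"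
    using pxpy by (auto simp: h_def complex_eq_iff)
  have multEq: "crit_mult u z = zorder h z" if "z \<in> ball 0 1" for z
    unfolding crit_mult_def
    by (rule zorder_cong[OF eventually_mono[OF eventually_at_in_open'[OF open_ball that]]])
       (use crit in auto)

  have hholo: "h holomorphic_on ball 0 1"
  proof -
    have "deriv f holomorphic_on ball 0 1" by (rule holomorphic_deriv[OF hol open_ball])
    moreover have "deriv f z = h z" if "z \<in> ball 0 1" for z
      using DERIV_imp_deriv[OF fder[OF that]] .
    ultimately show ?thesis using holomorphic_transform by metis
  qed
  have hnz: "h z \<noteq> 0" if "z \<in> sphere 0 1" for z
    using grad_nz[OF that] by (simp add: h_def)
  obtain r where r0: "0 < r" and r1: "r < 1"
    and rnz: "\<And>z. r \<le> norm z \<Longrightarrow> norm z \<le> 1 \<Longrightarrow> h z \<noteq> 0"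
  proof -
    define Z where "Z = {z \<in> cball 0 1. h z = 0}"
    have cZ: "compact Z"
      unfolding Z_def
      unfolding compact_eq_bounded_closed
      using continuous_closed_preimage_constant[OF conth closed_cball, of 0]
        bounded_subset[OF bounded_cball[of 0 1], of "{z \<in> cball 0 1. h z = 0}"] by (auto simp: subset_iff)
    show ?thesis
    proof (cases "Z = {}")
      case True
      show ?thesis by (rule that[of "1/2"]) (use True in \<open>auto simp: Z_def\<close>)
    next
      case False
      obtain z0 where z0: "z0 \<in> Z" and mx: "\<And>z. z \<in> Z \<Longrightarrow> norm z \<le> norm z0"
        using compact_attains_sup[OF compact_continuous_image[OF continuous_on_norm_id cZ]] False
        by auto
      have "norm z0 < 1"
        using z0 hnz by (force simp: Z_def)
      show ?thesis
      proof (rule that[of "(1 + norm z0) / 2"])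
        fix z :: complex assume a: "(1 + norm z0) / 2 \<le> norm z" "norm z \<le> 1"
        show "h z \<noteq> 0"
        proof
          assume "h z = 0"
          then have "z \<in> Z" using a by (simp add: Z_def)
          from mx[OF this] a \<open>norm z0 < 1\<close> show False by simp
        qed
      qed (use \<open>norm z0 < 1\<close> in \<open>simp_all add: field_simps add_pos_nonneg\<close>)
    qed
  qed
  define Zs where "Zs = {z \<in> ball 0 1. h z = 0}"
  have Zs_eq: "Zs = {z \<in> cball 0 r. h z = 0}"
    using rnz r1 by (force simp: Zs_def)
  have finZ: "finite Zs"
  proof (cases "h constant_on ball 0 1")
    case True
    then obtain c where c: "\<And>z. z \<in> ball 0 1 \<Longrightarrow> h z = c" by (auto simp: constant_on_def)
    have "h 1 = c"
      by (rule continuous_constant_on_closure[of "ball 0 1"]) (use conth c in auto)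
    then have "c \<noteq> 0" using hnz[of 1] by simp
    then have "Zs = {}" using c by (auto simp: Zs_def)
    then show ?thesis by simp
  next
    case False
    show ?thesis unfolding Zs_eq
      by (rule holomorphic_compact_finite_zeros[OF hholo open_ball connected_ball compact_cball _ False])
         (use r1 in auto)
  qed
  have sumEq: "(\<Sum>z\<in>{z \<in> ball 0 1. px u z = 0 \<and> py u z = 0}. crit_mult u z) = (\<Sum>z\<in>Zs. zorder h z)"
    unfolding setEq Zs_def by (rule sum.cong) (auto simp: multEq)
  define \<Phi> where "\<Phi> = (\<lambda>z. \<i> * z * h z)"
  have \<Phi>holo: "\<Phi> holomorphic_on ball 0 1" unfolding \<Phi>_def by (intro holomorphic_intros hholo)
  define c where "c = circlepath 0 r"
  have pic: "path_image c = sphere 0 r" using r0 by (simp add: c_def)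
  have sub: "sphere 0 r \<subseteq> ball (0::complex) 1" using r1 by auto
  have hnzc: "h w \<noteq> 0" if "w \<in> sphere 0 r" for w using rnz[of w] that r1 by simp
  have vc: "valid_path c" by (simp add: c_def)
  have wind1: "winding_number (\<Phi> \<circ> c) 0 = 1 + of_int (\<Sum>z\<in>Zs. zorder h z)"
  proof -
    have \<Phi>nz: "\<Phi> w \<noteq> 0" if "w \<in> sphere 0 r" for w
      using hnzc[OF that] that r0 by (auto simp: \<Phi>_def)
    have v\<Phi>: "valid_path (\<Phi> \<circ> c)"
      by (rule valid_path_compose_holomorphic[OF vc \<Phi>holo open_ball]) (use pic sub in auto)
    have n0: "0 \<notin> path_image (\<Phi> \<circ> c)"
      using \<Phi>nz by (auto simp: path_image_compose pic)
    have an: "\<Phi> analytic_on ball 0 1" using \<Phi>holo by (simp add: analytic_on_open)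
    have dh: "(h has_field_derivative deriv h w) (at w)" if "w \<in> ball 0 1" for w
      by (rule holomorphic_derivI[OF hholo open_ball that])
    have d\<Phi>: "deriv \<Phi> w = \<i> * h w + \<i> * w * deriv h w" if "w \<in> ball 0 1" for w
    proof (rule DERIV_imp_deriv)
      show "(\<Phi> has_field_derivative \<i> * h w + \<i> * w * deriv h w) (at w)"
        unfolding \<Phi>_def using dh[OF that]
        by (auto intro!: derivative_eq_intros simp: algebra_simps)
    qed
    have "winding_number (\<Phi> \<circ> c) 0 = 1/(2*pi*\<i>) * contour_integral (\<Phi> \<circ> c) (\<lambda>w. 1/(w - 0))"
      by (rule winding_number_valid_path[OF v\<Phi> n0])
    also have "contour_integral (\<Phi> \<circ> c) (\<lambda>w. 1/(w - 0)) = contour_integral c (\<lambda>w. deriv \<Phi> w * (1 / (\<Phi> w - 0)))"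
      by (rule contour_integral_comp_analyticW[OF an vc]) (use pic sub in auto)
    also have "\<dots> = contour_integral c (\<lambda>w. 1/(w - 0) + deriv h w * 1 / h w)"
    proof (rule contour_integral_eq)
      fix w assume "w \<in> path_image c"
      then have w: "w \<in> sphere 0 r" by (simp add: pic)
      then have "w \<noteq> 0" "h w \<noteq> 0" using r0 hnzc by auto
      moreover have "w \<in> ball 0 1" using w sub by auto
      ultimately show "deriv \<Phi> w * (1 / (\<Phi> w - 0)) = 1/(w - 0) + deriv h w * 1 / h w"
        unfolding d\<Phi>[OF \<open>w \<in> ball 0 1\<close>] by (simp add: \<Phi>_def field_simps)
    qed
    also have "\<dots> = contour_integral c (\<lambda>w. 1/(w - 0)) + contour_integral c (\<lambda>w. deriv h w * 1 / h w)"
    proof (rule contour_integral_add)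
      have "0 \<notin> path_image c" using r0 by (simp add: pic)
      from has_contour_integral_winding_number[OF vc this]
      show "(\<lambda>w. 1/(w - 0)) contour_integrable_on c" by (rule has_contour_integral_integrable)
    next
      have cd: "continuous_on (sphere 0 r) (deriv h)"
        using holomorphic_on_imp_continuous_on[OF holomorphic_deriv[OF hholo open_ball]] sub
        by (rule continuous_on_subset)
      have ch: "continuous_on (sphere 0 r) h"
        using conth by (rule continuous_on_subset) (use sub in auto)
      have "continuous_on (sphere 0 r) (\<lambda>w. deriv h w * 1 / h w)"
        using hnzc by (intro continuous_intros cd ch) auto
      then show "(\<lambda>w. deriv h w * 1 / h w) contour_integrable_on c"
        unfolding c_def by (intro contour_integrable_continuous_circlepath) (use r0 in simp)
    qed
    also have "contour_integral c (\<lambda>w. 1/(w - 0)) = 2 * pi * \<i>"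
    proof -
      have "0 \<notin> path_image c" using r0 by (simp add: pic)
      from contour_integral_unique[OF has_contour_integral_winding_number[OF vc this]]
      show ?thesis using r0 by (simp add: c_def winding_number_circlepath_centre)
    qed
    also have "contour_integral c (\<lambda>w. deriv h w * 1 / h w) =
        2 * pi * \<i> * (\<Sum>p\<in>{w \<in> ball 0 1. h w = 0 \<or> w \<in> {}}. winding_number c p * 1 * of_int (zorder h p))"
    proof (rule argument_principle)
      show "h holomorphic_on ball 0 1 - {}" using hholo by simp
      show "(\<lambda>_. 1) holomorphic_on ball 0 1" by simp
      show "pathfinish c = pathstart c" by (simp add: c_def)
      show "path_image c \<subseteq> ball 0 1 - {w \<in> ball 0 1. h w = 0 \<or> w \<in> {}}"
        using pic sub hnzc by auto
      show "\<forall>z. z \<notin> ball 0 1 \<longrightarrow> winding_number c z = 0"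
        using winding_number_zero_outside[of c "ball 0 1"] vc pic sub
        by (auto simp: valid_path_imp_path c_def)
      show "finite {w \<in> ball 0 1. h w = 0 \<or> w \<in> {}}" using finZ by (simp add: Zs_def)
    qed (use vc in auto)
    also have "(\<Sum>p\<in>{w \<in> ball 0 1. h w = 0 \<or> w \<in> {}}. winding_number c p * 1 * of_int (zorder h p))
        = (\<Sum>p\<in>Zs. of_int (zorder h p))"
    proof (rule sum.cong)
      fix p assume "p \<in> Zs"
      then have "norm p < r" using rnz r1 by (force simp: Zs_def)
      then have "winding_number c p = 1"
        unfolding c_def by (intro winding_number_circlepath) simp
      then show "winding_number c p * 1 * of_int (zorder h p) = of_int (zorder h p)" by simp
    qed (simp add: Zs_def)
    finally have eq: "winding_number (\<Phi> \<circ> c) 0 = 1/(2*pi*\<i>) * (2*pi*\<i> + 2*pi*\<i> * (\<Sum>p\<in>Zs. of_int (zorder h p)))" .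
    have "(2*pi*\<i> + 2*pi*\<i> * (\<Sum>p\<in>Zs. of_int (zorder h p))) = (2*pi*\<i>) * (1 + (\<Sum>p\<in>Zs. of_int (zorder h p)))"
      by (simp add: algebra_simps)
    then show ?thesis by (simp only: eq) simp
  qed
  define \<gamma> where "\<gamma> = (\<lambda>t. vector_derivative (\<lambda>\<theta>. f (cis \<theta>)) (at (2 * pi * t)))"
  have \<gamma>eq: "\<gamma> = (\<lambda>t. \<Phi> (cis (2 * pi * t)))"
  proof
    fix t
    show "\<gamma> t = \<Phi> (cis (2 * pi * t))"
      unfolding \<gamma>_def \<Phi>_def
      by (rule vector_derivative_at[OF boundary_deriv[OF contf conth fder]]) auto
  qed
  have homl: "homotopic_loops (-{0}) (\<Phi> \<circ> c) \<gamma>"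
  proof -
    define m where "m = (\<lambda>p::real\<times>real. complex_of_real (r + fst p * (1 - r)) * cis (2 * pi * snd p))"
    have nm: "norm (m p) = r + fst p * (1 - r)" if "p \<in> {0..1} \<times> {0..1}" for p
    proof -
      have nc: "norm (complex_of_real \<rho> * cis \<theta>) = \<bar>\<rho>\<bar>" for \<rho> \<theta> by (simp add: norm_mult)
      have "0 \<le> fst p * (1 - r)" using that r1 by auto
      then show ?thesis unfolding m_def nc using r0 by simp
    qed
    have mr: "r \<le> norm (m p) \<and> norm (m p) \<le> 1" if "p \<in> {0..1} \<times> {0..1}" for p
    proof -
      have "0 \<le> fst p * (1 - r)" "fst p * (1 - r) \<le> 1 * (1 - r)"
        using that r1 by (auto intro: mult_right_mono)
      then show ?thesis using nm[OF that] by simp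
    qed
    have cm: "continuous_on ({0..1} \<times> {0..1}) m"
      unfolding m_def by (intro continuous_intros)
    have c\<Phi>: "continuous_on (cball 0 1) \<Phi>"
      unfolding \<Phi>_def by (intro continuous_intros conth)
    have \<Phi>nz: "\<Phi> (m p) \<noteq> 0" if "p \<in> {0..1} \<times> {0..1}" for p
      using mr[OF that] rnz[of "m p"] r0 by (auto simp: \<Phi>_def)
    show ?thesis unfolding homotopic_loops
    proof (intro exI[of _ "\<lambda>p. \<Phi> (m p)"] conjI ballI)
      show "continuous_on ({0..1} \<times> {0..1}) (\<lambda>p. \<Phi> (m p))"
        by (rule continuous_on_compose2[OF c\<Phi> cm]) (use mr in auto)
      show "(\<lambda>p. \<Phi> (m p)) \<in> {0..1} \<times> {0..1} \<rightarrow> - {0}"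
        using \<Phi>nz by auto
      fix x :: real
      show "\<Phi> (m (0, x)) = (\<Phi> \<circ> c) x"
        by (simp add: m_def c_def circlepath cis_conv_exp mult_ac)
      show "\<Phi> (m (1, x)) = \<gamma> x"
        by (simp add: m_def \<gamma>eq)
    next
      fix t :: real
      show "pathfinish ((\<lambda>p. \<Phi> (m p)) \<circ> Pair t) = pathstart ((\<lambda>p. \<Phi> (m p)) \<circ> Pair t)"
        by (simp add: pathfinish_def pathstart_def m_def)
    qed
  qed
  have "WN f = 1 + of_int (\<Sum>z\<in>Zs. zorder h z)"
    using winding_number_homotopic_loops[OF homl] wind1 by (simp add: WN_def \<gamma>_def)
  then show ?thesis by (simp only: sumEq) simp
qed

end
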